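(* Let $m,n$ be relatively prime positive integers and $\pi$ an $(m,n)$-Dyck path. Then \[ \sum_{p\in v_*(\pi)} k(p) \;=\; \sum_{p\in v^*(\pi)} k(p). \]
   Context: An $(m,n)$-Dyck path is a lattice path from $(0,0)$ to $(m,n)$ with steps $(1,0)$ (horizontal) and $(0,1)$ (vertical) staying weakly above the diagonal $y=\frac nm x$. "The line through a point $p$" means the line through $p$ parallel to the diagonal. For a lattice point $p$, $k(p)$ is the number of vertical steps of $\pi$ not containing $p$ that the line through $p$ intersects. An outer vertex of $\pi$ is a vertex where a vertical step is followed by a horizontal step, an internal vertex one where a horizontal step is followed by a vertical step; $v^*(\pi)$ is the set of outer vertices except the one farthest from the diagonal, and $v_*(\pi)$ is the set of internal vertices. *)

theory Defs
  imports Main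
begin

text \<open>A lattice path is encoded as a list of steps: True = vertical step (0,1),
  False = horizontal step (1,0). The i-th vertex (0 \<le> i \<le> length) is the
  point reached after the first i steps.\<close>

definition vtx :: "bool list \<Rightarrow> nat \<Rightarrow> int \<times> int" where
  "vtx \<pi> i = (int (length (filter Not (take i \<pi>))), int (length (filter id (take i \<pi>))))"

definition dyck_path :: "nat \<Rightarrow> nat \<Rightarrow> bool list \<Rightarrow> bool" where
  "dyck_path m n \<pi> \<longleftrightarrow> vtx \<pi> (length \<pi>) = (int m, int n) \<and>
     (\<forall>i \<le> length \<pi>. int n * fst (vtx \<pi> i) \<le> int m * snd (vtx \<pi> i))"

text \<open>The line through p parallel to the diagonal is {(x,y). m*y - n*x = lv m n p}.\<close>
definition lv :: "nat \<Rightarrow> nat \<Rightarrow> int \<times> int \<Rightarrow> int" where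
  "lv m n p = int m * snd p - int n * fst p"

text \<open>The vertical step i (with \<pi>!i = True) is the closed segment from vtx \<pi> i
  to vtx \<pi> (i+1).\<close>
definition step_contains :: "bool list \<Rightarrow> nat \<Rightarrow> int \<times> int \<Rightarrow> bool" where
  "step_contains \<pi> i p \<longleftrightarrow> fst p = fst (vtx \<pi> i) \<and>
     snd (vtx \<pi> i) \<le> snd p \<and> snd p \<le> snd (vtx \<pi> i) + 1"

definition line_meets_step :: "nat \<Rightarrow> nat \<Rightarrow> bool list \<Rightarrow> nat \<Rightarrow> int \<times> int \<Rightarrow> bool" where
  "line_meets_step m n \<pi> i p \<longleftrightarrow>
     lv m n (vtx \<pi> i) \<le> lv m n p \<and> lv m n p \<le> lv m n (vtx \<pi> (Suc i))"

text \<open>k(p): number of vertical steps not containing p met by the line through p.\<close>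
definition kval :: "nat \<Rightarrow> nat \<Rightarrow> bool list \<Rightarrow> int \<times> int \<Rightarrow> nat" where
  "kval m n \<pi> p = card {i. i < length \<pi> \<and> \<pi> ! i \<and> \<not> step_contains \<pi> i p \<and>
                         line_meets_step m n \<pi> i p}"

definition outer_vertices :: "bool list \<Rightarrow> (int \<times> int) set" where
  "outer_vertices \<pi> = {vtx \<pi> j | j. 0 < j \<and> j < length \<pi> \<and> \<pi> ! (j - 1) \<and> \<not> \<pi> ! j}"

definition internal_vertices :: "bool list \<Rightarrow> (int \<times> int) set" where
  "internal_vertices \<pi> = {vtx \<pi> j | j. 0 < j \<and> j < length \<pi> \<and> \<not> \<pi> ! (j - 1) \<and> \<pi> ! j}"

text \<open>v^*: outer vertices except the one farthest from the diagonal
  (distance is proportional to lv).\<close>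
definition outer_vertices_star :: "nat \<Rightarrow> nat \<Rightarrow> bool list \<Rightarrow> (int \<times> int) set" where
  "outer_vertices_star m n \<pi> =
     outer_vertices \<pi> - {arg_max_on (lv m n) (outer_vertices \<pi>)}"

end

theory Submission
  imports Defs
begin

lemma vtx_0[simp]: "vtx \<pi> 0 = (0,0)" by (simp add: vtx_def)

lemma vtx_Suc: "j < length \<pi> \<Longrightarrow> vtx \<pi> (Suc j) =
  (if \<pi>!j then (fst (vtx \<pi> j), snd (vtx \<pi> j) + 1) else (fst (vtx \<pi> j) + 1, snd (vtx \<pi> j)))"
  by (simp add: vtx_def take_Suc_conv_app_nth)

lemma vtx_sum: "j \<le> length \<pi> \<Longrightarrow> fst (vtx \<pi> j) + snd (vtx \<pi> j) = int j"
proof -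
  assume "j \<le> length \<pi>"
  have "length (filter id (take j \<pi>)) + length (filter (\<lambda>x. \<not> id x) (take j \<pi>)) = length (take j \<pi>)"
    by (rule sum_length_filter_compl)
  then show ?thesis using \<open>j \<le> length \<pi>\<close> by (simp add: vtx_def)
qed

lemma len_filter_take: "length (filter P (take j xs)) \<le> length (filter P xs)"
  by (metis append_take_drop_id filter_append length_append le_add1)

lemma vtx_bounds: "0 \<le> fst (vtx \<pi> j) \<and> fst (vtx \<pi> j) \<le> fst (vtx \<pi> (length \<pi>)) \<and>
   0 \<le> snd (vtx \<pi> j) \<and> snd (vtx \<pi> j) \<le> snd (vtx \<pi> (length \<pi>))"
  using len_filter_take[of Not j \<pi>] len_filter_take[of id j \<pi>] by (simp add: vtx_def)

lemma lv_pair[simp]: "lv m n (x, y) = int m * y - int n * x" by (simp add: lv_def)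

lemma lv_inj:
  fixes x1 y1 x2 y2 :: int
  assumes "coprime m n" "0 < m"
    "0 \<le> x1" "x1 \<le> int m" "0 \<le> y1" "y1 \<le> int n"
    "0 \<le> x2" "x2 \<le> int m" "0 \<le> y2" "y2 \<le> int n"
    "int m * y1 - int n * x1 = int m * y2 - int n * x2"
  shows "(x1 = x2 \<and> y1 = y2) \<or> (x1 = int m \<and> y1 = int n \<and> x2 = 0 \<and> y2 = 0)
       \<or> (x1 = 0 \<and> y1 = 0 \<and> x2 = int m \<and> y2 = int n)"
proof -
  have e: "int m * (y1 - y2) = int n * (x1 - x2)" using assms(11) by (simp add: algebra_simps)
  have "int m dvd int n * (x1 - x2)" using e by (metis dvd_triv_left)
  moreover have "coprime (int m) (int n)" using assms(1) by simp
  ultimately have "int m dvd (x1 - x2)" using coprime_dvd_mult_right_iff by blast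
  then obtain c where c: "x1 - x2 = int m * c" by blast
  have "c \<le> 1"
  proof (rule ccontr)
    assume "\<not> c \<le> 1" hence "c \<ge> 2" by simp
    hence "int m * c \<ge> int m * 2" using assms(2) by simp
    thus False using c assms(2,3,4,7,8) by linarith
  qed
  moreover have "c \<ge> -1"
  proof (rule ccontr)
    assume "\<not> c \<ge> -1" hence "c \<le> -2" by simp
    hence "int m * c \<le> int m * (-2)" using mult_left_mono[of c "-2" "int m"] by linarith
    thus False using c assms(2,3,4,7,8) by linarith
  qed
  ultimately have "c = 0 \<or> c = 1 \<or> c = -1" by linarith
  moreover
  { assume "c = 0" hence "x1 = x2" using c by simp
    hence "y1 = y2" using e assms(2) by simp
    hence ?thesis using \<open>x1 = x2\<close> by simp }
  moreover
  { assume "c = 1" hence "x1 = x2 + int m" using c by simp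
    hence "x1 = int m" "x2 = 0" using assms(3,4,7,8) by linarith+
    hence "int m * (y1 - y2) = int m * int n" using e by simp
    hence "y1 - y2 = int n" using assms(2) by simp
    hence "y1 = int n" "y2 = 0" using assms(5,6,9,10) by linarith+
    hence ?thesis using \<open>x1 = int m\<close> \<open>x2 = 0\<close> by blast }
  moreover
  { assume "c = -1" hence "x2 = x1 + int m" using c by simp
    hence "x2 = int m" "x1 = 0" using assms(3,4,7,8) by linarith+
    hence "int m * (y2 - y1) = int m * int n" using e by (simp add: algebra_simps)
    hence "y2 - y1 = int n" using assms(2) by simp
    hence "y2 = int n" "y1 = 0" using assms(5,6,9,10) by linarith+
    hence ?thesis using \<open>x2 = int m\<close> \<open>x1 = 0\<close> by blast }
  ultimately show ?thesis by blast
qed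

locale dyck =
  fixes m n :: nat and \<pi> :: "bool list"
  assumes m0: "0 < m" and n0: "0 < n" and cop: "coprime m n"
    and dp: "dyck_path m n \<pi>"
begin

abbreviation "L \<equiv> length \<pi>"
definition h :: "nat \<Rightarrow> int" where "h j = lv m n (vtx \<pi> j)"
definition U :: "nat set" where "U = {i. i < L \<and> \<pi>!i}"
definition f :: "int \<Rightarrow> nat" where "f t = card {i\<in>U. h i < t \<and> t < h i + int m}"

lemma VL: "vtx \<pi> L = (int m, int n)" using dp by (simp add: dyck_path_def)
lemma L_eq: "L = m + n" using vtx_sum[of L \<pi>] VL by simp
lemma h_nonneg: "j \<le> L \<Longrightarrow> 0 \<le> h j" using dp unfolding dyck_path_def h_def lv_def by auto
lemma h0[simp]: "h 0 = 0" by (simp add: h_def)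
lemma hL: "h L = 0" by (simp add: h_def VL)
lemma bnd: "0 \<le> fst (vtx \<pi> j) \<and> fst (vtx \<pi> j) \<le> int m \<and> 0 \<le> snd (vtx \<pi> j) \<and> snd (vtx \<pi> j) \<le> int n"
  using vtx_bounds[of \<pi> j] VL by simp
lemma h_Suc: "j < L \<Longrightarrow> h (Suc j) = (if \<pi>!j then h j + int m else h j - int n)"
  unfolding h_def using vtx_Suc[of j \<pi>] by (cases "vtx \<pi> j") (auto simp: algebra_simps)

lemma hinj: assumes "i \<le> L" "0 < j" "j < L" "h i = h j" shows "vtx \<pi> i = vtx \<pi> j"
proof -
  obtain x1 y1 where v1: "vtx \<pi> i = (x1, y1)" by fastforce
  obtain x2 y2 where v2: "vtx \<pi> j = (x2, y2)" by fastforce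
  have s1: "x1 + y1 = int i" using vtx_sum[of i \<pi>] assms v1 by simp
  have s2: "x2 + y2 = int j" using vtx_sum[of j \<pi>] assms v2 by simp
  have "(x1 = x2 \<and> y1 = y2) \<or> (x1 = int m \<and> y1 = int n \<and> x2 = 0 \<and> y2 = 0)
       \<or> (x1 = 0 \<and> y1 = 0 \<and> x2 = int m \<and> y2 = int n)"
    apply (rule lv_inj[OF cop m0])
    using bnd[of i] bnd[of j] v1 v2 assms(4) unfolding h_def by auto
  then show ?thesis using s1 s2 v1 v2 assms L_eq by auto
qed

lemma kval_eq: assumes "0 < j" "j < L" shows "kval m n \<pi> (vtx \<pi> j) = f (h j)"
proof -
  have "{i. i < L \<and> \<pi> ! i \<and> \<not> step_contains \<pi> i (vtx \<pi> j) \<and> line_meets_step m n \<pi> i (vtx \<pi> j)}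
      = {i\<in>U. h i < h j \<and> h j < h i + int m}"
  proof (rule set_eqI, rule iffI)
    fix i assume "i \<in> {i. i < L \<and> \<pi> ! i \<and> \<not> step_contains \<pi> i (vtx \<pi> j) \<and> line_meets_step m n \<pi> i (vtx \<pi> j)}"
    hence i: "i < L" "\<pi>!i" "\<not> step_contains \<pi> i (vtx \<pi> j)" "line_meets_step m n \<pi> i (vtx \<pi> j)" by auto
    have hs: "h (Suc i) = h i + int m" using h_Suc[OF i(1)] i(2) by simp
    have vs: "vtx \<pi> (Suc i) = (fst (vtx \<pi> i), snd (vtx \<pi> i) + 1)" using vtx_Suc[OF i(1)] i(2) by simp
    have le: "h i \<le> h j" "h j \<le> h i + int m" using i(4) hs unfolding line_meets_step_def h_def by auto
    have "h i \<noteq> h j"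
    proof
      assume "h i = h j"
      hence "vtx \<pi> i = vtx \<pi> j" using hinj[of i j] i assms by simp
      thus False using i(3) unfolding step_contains_def by auto
    qed
    moreover have "h j \<noteq> h i + int m"
    proof
      assume "h j = h i + int m"
      hence "vtx \<pi> (Suc i) = vtx \<pi> j" using hinj[of "Suc i" j] i assms hs by simp
      hence "vtx \<pi> j = (fst (vtx \<pi> i), snd (vtx \<pi> i) + 1)" using vs by simp
      thus False using i(3) unfolding step_contains_def by auto
    qed
    ultimately show "i \<in> {i\<in>U. h i < h j \<and> h j < h i + int m}" using le i unfolding U_def by auto
  next
    fix i assume "i \<in> {i\<in>U. h i < h j \<and> h j < h i + int m}"
    hence i: "i < L" "\<pi>!i" "h i < h j" "h j < h i + int m" unfolding U_def by auto
    have hs: "h (Suc i) = h i + int m" using h_Suc[OF i(1)] i(2) by simp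
    have "\<not> step_contains \<pi> i (vtx \<pi> j)"
    proof
      assume sc: "step_contains \<pi> i (vtx \<pi> j)"
      obtain x y where v: "vtx \<pi> i = (x, y)" by fastforce
      obtain x' y' where v': "vtx \<pi> j = (x', y')" by fastforce
      have "x' = x" "y \<le> y'" "y' \<le> y + 1" using sc v v' unfolding step_contains_def by auto
      hence "y' = y \<or> y' = y + 1" by linarith
      thus False using i(3,4) \<open>x' = x\<close> v v' unfolding h_def by (auto simp: algebra_simps)
    qed
    moreover have "line_meets_step m n \<pi> i (vtx \<pi> j)"
      using i hs unfolding line_meets_step_def h_def by auto
    ultimately show "i \<in> {i. i < L \<and> \<pi> ! i \<and> \<not> step_contains \<pi> i (vtx \<pi> j) \<and> line_meets_step m n \<pi> i (vtx \<pi> j)}"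
      using i by auto
  qed
  thus ?thesis unfolding kval_def f_def by simp
qed

lemma finU: "finite U" unfolding U_def by auto

lemma sumU: "(\<Sum>k\<in>U. int (f (h k))) = (\<Sum>k\<in>U. int (f (h (Suc k))))"
proof -
  have hs: "k \<in> U \<Longrightarrow> h (Suc k) = h k + int m" for k using h_Suc[of k] unfolding U_def by auto
  define A where "A = (SIGMA k:U. {i\<in>U. h i < h k \<and> h k < h i + int m})"
  define B where "B = (SIGMA k:U. {i\<in>U. h i < h k + int m \<and> h k + int m < h i + int m})"
  have "card A = (\<Sum>k\<in>U. f (h k))" unfolding A_def f_def using finU by (subst card_SigmaI) auto
  moreover have "card B = (\<Sum>k\<in>U. f (h (Suc k)))" unfolding B_def f_def using finU hs
    by (subst card_SigmaI) auto
  moreover have "B = prod.swap ` A" unfolding A_def B_def by (auto simp: image_iff)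
  hence "card B = card A" by (simp add: card_image)
  ultimately have "(\<Sum>k\<in>U. f (h k)) = (\<Sum>k\<in>U. f (h (Suc k)))" by simp
  thus ?thesis by (metis of_nat_sum)
qed

lemma f0: "f 0 = 0"
proof -
  have "{i\<in>U. h i < 0 \<and> 0 < h i + int m} = {}" unfolding U_def using h_nonneg
    by (auto simp: not_less intro: h_nonneg less_imp_le)
  thus ?thesis unfolding f_def by (metis card.empty)
qed

definition Jmin :: "nat set" where "Jmin = {j. 0 < j \<and> j < L \<and> \<not> \<pi>!(j-1) \<and> \<pi>!j}"
definition Jmax :: "nat set" where "Jmax = {j. 0 < j \<and> j < L \<and> \<pi>!(j-1) \<and> \<not> \<pi>!j}"

lemma telescope: "(\<Sum>j\<in>Jmin. int (f (h j))) = (\<Sum>j\<in>Jmax. int (f (h j)))"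
proof -
  define F where "F j = int (f (h j))" for j
  define d where "d j = (if \<pi>!j then 1 else 0 :: int)" for j
  have F0: "F 0 = 0" unfolding F_def using f0 by simp
  have FL: "F L = 0" unfolding F_def using f0 hL by simp
  have L1: "1 \<le> L" using L_eq m0 by simp
  have SL: "Suc (L-1) = L" using L1 by linarith
  have A: "(\<Sum>j\<in>Jmin. F j) = (\<Sum>j\<in>{1..<L}. if \<not> \<pi>!(j-1) \<and> \<pi>!j then F j else 0)"
  proof -
    have "Jmin = {j\<in>{1..<L}. \<not> \<pi>!(j-1) \<and> \<pi>!j}" unfolding Jmin_def by auto
    show ?thesis unfolding \<open>Jmin = _\<close> by (rule sum.inter_filter) simp
  qed
  have B: "(\<Sum>j\<in>Jmax. F j) = (\<Sum>j\<in>{1..<L}. if \<pi>!(j-1) \<and> \<not> \<pi>!j then F j else 0)"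
  proof -
    have "Jmax = {j\<in>{1..<L}. \<pi>!(j-1) \<and> \<not> \<pi>!j}" unfolding Jmax_def by auto
    show ?thesis unfolding \<open>Jmax = _\<close> by (rule sum.inter_filter) simp
  qed
  have C: "(\<Sum>j\<in>{1..<L}. if \<not> \<pi>!(j-1) \<and> \<pi>!j then F j else 0) - (\<Sum>j\<in>{1..<L}. if \<pi>!(j-1) \<and> \<not> \<pi>!j then F j else 0)
     = (\<Sum>j\<in>{1..<L}. d j * F j) - (\<Sum>j\<in>{1..<L}. d (j-1) * F j)"
    unfolding sum_subtractf[symmetric] by (rule sum.cong) (auto simp: d_def)
  have D1: "(\<Sum>j\<in>{1..<L}. d j * F j) = (\<Sum>j\<in>U. F j)"
  proof -
    have "(\<Sum>j\<in>{0..<L}. d j * F j) = d 0 * F 0 + (\<Sum>j\<in>{1..<L}. d j * F j)"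
      proof -
      have "0 < L" using L1 by linarith
      from sum.atLeast_Suc_lessThan[OF this, of "\<lambda>j. d j * F j"] show ?thesis by simp
    qed
    hence "(\<Sum>j\<in>{1..<L}. d j * F j) = (\<Sum>j\<in>{0..<L}. d j * F j)" using F0 by simp
    also have "\<dots> = (\<Sum>j\<in>{0..<L}. if \<pi>!j then F j else 0)" by (rule sum.cong) (auto simp: d_def)
    also have "\<dots> = (\<Sum>j\<in>{j\<in>{0..<L}. \<pi>!j}. F j)" by (rule sum.inter_filter[symmetric]) simp
    also have "{j\<in>{0..<L}. \<pi>!j} = U" unfolding U_def by auto
    finally show ?thesis .
  qed
  have D2: "(\<Sum>j\<in>{1..<L}. d (j-1) * F j) = (\<Sum>j\<in>U. F (Suc j))"
  proof -
    have e1: "{1..<L} = {Suc 0..<Suc (L-1)}" using SL by simp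
    have "(\<Sum>j\<in>{1..<L}. d (j-1) * F j) = (\<Sum>j\<in>{0..<L-1}. d j * F (Suc j))"
      unfolding e1 sum.shift_bounds_Suc_ivl by simp
    also have "\<dots> = (\<Sum>j\<in>{0..<L}. d j * F (Suc j))"
    proof -
      have "{0..<L} = {0..<Suc (L-1)}" using SL by simp
      hence "(\<Sum>j\<in>{0..<L}. d j * F (Suc j)) = (\<Sum>j\<in>{0..<L-1}. d j * F (Suc j)) + d (L-1) * F (Suc (L-1))"
        by simp
      moreover have "Suc (L-1) = L" using SL by simp
      ultimately show ?thesis using FL by simp
    qed
    also have "\<dots> = (\<Sum>j\<in>{0..<L}. if \<pi>!j then F (Suc j) else 0)" by (rule sum.cong) (auto simp: d_def)
    also have "\<dots> = (\<Sum>j\<in>{j\<in>{0..<L}. \<pi>!j}. F (Suc j))" by (rule sum.inter_filter[symmetric]) simp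
    also have "{j\<in>{0..<L}. \<pi>!j} = U" unfolding U_def by auto
    finally show ?thesis .
  qed
  have "(\<Sum>j\<in>Jmin. F j) - (\<Sum>j\<in>Jmax. F j) = 0"
    using A B C D1 D2 sumU unfolding F_def by simp
  thus ?thesis unfolding F_def by simp
qed


lemma inj_vtx: "inj_on (vtx \<pi>) {..L}"
proof (rule inj_onI)
  fix i j assume a: "i \<in> {..L}" "j \<in> {..L}" and e: "vtx \<pi> i = vtx \<pi> j"
  have "int i = fst (vtx \<pi> i) + snd (vtx \<pi> i)" using vtx_sum[of i \<pi>] a(1) by simp
  also have "\<dots> = fst (vtx \<pi> j) + snd (vtx \<pi> j)" by (simp only: e)
  also have "\<dots> = int j" using vtx_sum[of j \<pi>] a(2) by simp
  finally show "i = j" by simp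
qed

lemma internal_eq: "internal_vertices \<pi> = vtx \<pi> ` Jmin"
  unfolding internal_vertices_def Jmin_def by blast
lemma outer_eq: "outer_vertices \<pi> = vtx \<pi> ` Jmax"
  unfolding outer_vertices_def Jmax_def by blast

lemma sum_J: assumes "J \<subseteq> {j. 0 < j \<and> j < L}"
  shows "(\<Sum>p\<in>vtx \<pi> ` J. kval m n \<pi> p) = (\<Sum>j\<in>J. f (h j))"
proof -
  have "inj_on (vtx \<pi>) J" using inj_vtx by (rule inj_on_subset) (use assms in auto)
  hence "(\<Sum>p\<in>vtx \<pi> ` J. kval m n \<pi> p) = (\<Sum>j\<in>J. kval m n \<pi> (vtx \<pi> j))"
    using sum.reindex[of "vtx \<pi>" J "kval m n \<pi>"] by (simp add: comp_def)
  also have "\<dots> = (\<Sum>j\<in>J. f (h j))" by (rule sum.cong) (use assms kval_eq in auto)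
  finally show ?thesis .
qed

lemma global_max: obtains j0 where "j0 \<in> Jmax" "\<And>j. j \<le> L \<Longrightarrow> h j \<le> h j0"
proof -
  have fin: "finite (h ` {..L})" by simp
  have ne: "h ` {..L} \<noteq> {}" by simp
  obtain j0 where j0': "j0 \<in> {..L}" "Max (h ` {..L}) = h j0" using Max_in[OF fin ne] by blast
  hence j0: "j0 \<le> L" "h j0 = Max (h ` {..L})" by auto
  have ge: "j \<le> L \<Longrightarrow> h j \<le> h j0" for j using j0 Max_ge[OF fin] by auto
  have L1: "1 \<le> L" using L_eq m0 by simp
  have L0: "0 < L" using L1 by linarith
  have p0: "\<pi>!0"
  proof (rule ccontr)
    assume "\<not> \<pi>!0"
    hence "h 1 = - int n" using h_Suc[OF L0] by simp
    thus False using h_nonneg[of 1] L1 n0 by simp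
  qed
  hence "h 1 = int m" using h_Suc[OF L0] by simp
  hence "h j0 \<ge> int m" using ge[of 1] L1 by simp
  hence hj: "int m \<le> h j0" .
  have "j0 \<noteq> 0" proof assume "j0 = 0" thus False using hj m0 by simp qed
  moreover have "j0 \<noteq> L" proof assume "j0 = L" thus False using hj hL m0 by simp qed
  ultimately have jr: "0 < j0" "j0 < L" using j0 by auto
  have "\<pi>!(j0-1)"
  proof (rule ccontr)
    assume "\<not> \<pi>!(j0-1)"
    hence "h (Suc (j0-1)) = h (j0-1) - int n" using h_Suc[of "j0-1"] jr by simp
    moreover have "Suc (j0-1) = j0" using jr by simp
    moreover have "j0 - 1 \<le> L" using jr by linarith
    ultimately show False using ge[of "j0-1"] n0 by simp
  qed
  moreover have "\<not> \<pi>!j0"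
  proof
    assume "\<pi>!j0"
    hence "h (Suc j0) = h j0 + int m" using h_Suc[of j0] jr by simp
    thus False using ge[of "Suc j0"] m0 jr by simp
  qed
  ultimately have "j0 \<in> Jmax" using jr unfolding Jmax_def by simp
  thus ?thesis using that ge by blast
qed

lemma main: "(\<Sum>p\<in>internal_vertices \<pi>. kval m n \<pi> p) =
         (\<Sum>p\<in>outer_vertices_star m n \<pi>. kval m n \<pi> p)"
proof -
  obtain j0 where j0: "j0 \<in> Jmax" "\<And>j. j \<le> L \<Longrightarrow> h j \<le> h j0" using global_max by blast
  define a where "a = arg_max_on (lv m n) (outer_vertices \<pi>)"
  have wit: "vtx \<pi> j0 \<in> outer_vertices \<pi>" using j0(1) outer_eq by auto
  have "a \<in> outer_vertices \<pi> \<and> h j0 \<le> lv m n a"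
    unfolding a_def arg_max_on_def
  proof (rule arg_maxI[where x = "vtx \<pi> j0"])
    show "vtx \<pi> j0 \<in> outer_vertices \<pi>" by (rule wit)
  next
    fix y assume "y \<in> outer_vertices \<pi>"
    then obtain j where "j \<in> Jmax" "y = vtx \<pi> j" using outer_eq by auto
    thus "\<not> lv m n y > lv m n (vtx \<pi> j0)" using j0(2)[of j] unfolding Jmax_def h_def by auto
  next
    fix x assume x: "x \<in> outer_vertices \<pi>" and H: "\<forall>y. y \<in> outer_vertices \<pi> \<longrightarrow> \<not> lv m n y > lv m n x"
    have "vtx \<pi> j0 \<in> outer_vertices \<pi> \<longrightarrow> \<not> lv m n (vtx \<pi> j0) > lv m n x" using H by (rule spec)
    thus "x \<in> outer_vertices \<pi> \<and> h j0 \<le> lv m n x" using wit x unfolding h_def by auto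
  qed
  then obtain ja where ja: "ja \<in> Jmax" "a = vtx \<pi> ja" "h j0 \<le> h ja" using outer_eq unfolding h_def by auto
  have ka: "kval m n \<pi> a = 0"
  proof -
    have "kval m n \<pi> a = f (h ja)" using ja kval_eq unfolding Jmax_def by auto
    also have "{i\<in>U. h i < h ja \<and> h ja < h i + int m} = {}"
    proof -
      { fix i assume "i \<in> U" "h ja < h i + int m"
        hence "h (Suc i) = h i + int m" "Suc i \<le> L" using h_Suc[of i] unfolding U_def by auto
        hence False using j0(2)[of "Suc i"] ja(3) \<open>h ja < h i + int m\<close> by simp }
      thus ?thesis by blast
    qed
    hence "f (h ja) = 0" unfolding f_def by (metis card.empty)
    finally show ?thesis .
  qed
  have fo: "finite (outer_vertices \<pi>)" using outer_eq unfolding Jmax_def by simp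
  have "(\<Sum>p\<in>outer_vertices_star m n \<pi>. kval m n \<pi> p) = (\<Sum>p\<in>outer_vertices \<pi>. kval m n \<pi> p)"
    unfolding outer_vertices_star_def a_def[symmetric] using ka fo by (cases "a \<in> outer_vertices \<pi>") (simp_all add: sum.remove)
  also have "\<dots> = (\<Sum>j\<in>Jmax. f (h j))" unfolding outer_eq by (rule sum_J) (auto simp: Jmax_def)
  also have "\<dots> = (\<Sum>j\<in>Jmin. f (h j))" using telescope by (metis of_nat_eq_iff of_nat_sum)
  also have "\<dots> = (\<Sum>p\<in>internal_vertices \<pi>. kval m n \<pi> p)"
    unfolding internal_eq by (rule sum_J[symmetric]) (auto simp: Jmin_def)
  finally show ?thesis by simp
qed

end

theorem mainTheorem4:
  fixes m n :: nat and \<pi> :: "bool list"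
  assumes "0 < m" and "0 < n" and "coprime m n"
    and "dyck_path m n \<pi>"
  shows "(\<Sum>p\<in>internal_vertices \<pi>. kval m n \<pi> p) =
         (\<Sum>p\<in>outer_vertices_star m n \<pi>. kval m n \<pi> p)"
proof -
  interpret dyck m n \<pi> using assms by unfold_locales
  show ?thesis by (rule main)
qed

end
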